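(* Let $(\alpha_N)_{N\in\mathbb{N}}$ be an increasing sequence of positive real numbers with $\alpha_N\to\infty$. Let $\{[a_1,b_1),[a_2,b_2),\dots\}$ be a countable collection of pairwise disjoint intervals contained in $[0,1]$ with $\sum_n(b_n-a_n)=l\leq1$. Let $Z$ be a standard normal random variable. Then for every $N$, $$\left|\mathbb{P}\Big(\alpha_N Z\in\bigcup_{k\in\mathbb{Z}}\bigcup_{n}[a_n+k,b_n+k)\Big)-l\right|<4\exp(-2\pi^2\alpha_N^2).$$ *)

theory Defs
  imports "HOL-Probability.Probability"
begin

end

theory Submission
  imports Defs
begin

definition phi :: "real \<Rightarrow> real \<Rightarrow> real" where "phi a y = normal_density 0 a y"

lemma phi_nonneg: "0 \<le> phi a y" by (simp add: phi_def)

lemma phi_mono: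
  assumes "a > 0" "\<bar>z\<bar> \<le> \<bar>y\<bar>" shows "phi a y \<le> phi a z"
proof -
  have "z\<^sup>2 \<le> y\<^sup>2" using assms(2) by (metis abs_le_square_iff)
  hence "-(y)\<^sup>2/(2*a\<^sup>2) \<le> -(z)\<^sup>2/(2*a\<^sup>2)" using assms(1) by (simp add: divide_right_mono)
  thus ?thesis unfolding phi_def normal_density_def
    by (intro mult_left_mono) auto
qed

lemma phi_summable:
  assumes "a > 0" shows "summable (\<lambda>n::nat. phi a (real n))"
proof (rule summable_comparison_test)
  let ?r = "exp (-1/(2*a\<^sup>2))"
  let ?C = "1 / sqrt (2 * pi * a\<^sup>2)"
  show "\<exists>N. \<forall>n\<ge>N. norm (phi a (real n)) \<le> ?C * ?r ^ n"
  proof (intro exI allI impI)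
    fix n :: nat
    have "real n \<le> (real n)\<^sup>2" by (cases n) (auto simp: power2_eq_square)
    hence "-(real n)\<^sup>2/(2*a\<^sup>2) \<le> real n * (-1/(2*a\<^sup>2))" using assms
      by (simp add: divide_right_mono)
    hence "exp (-(real n)\<^sup>2/(2*a\<^sup>2)) \<le> ?r ^ n" by (simp add: exp_of_nat_mult[symmetric])
    thus "norm (phi a (real n)) \<le> ?C * ?r ^ n"
      unfolding phi_def normal_density_def by (auto intro!: divide_right_mono)
  qed
  show "summable (\<lambda>n. ?C * ?r ^ n)" using assms by (intro summable_mult summable_geometric) auto
qed

lemma phi_measurable[measurable]: "phi a \<in> borel_measurable borel"
  unfolding phi_def by measurable

lemma continuous_phi[continuous_intros]: "continuous_on S f \<Longrightarrow> continuous_on S (\<lambda>x. phi a (f x))"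
  unfolding phi_def normal_density_def divide_inverse by (intro continuous_intros)

lemma isCont_phi: "isCont (phi a) x"
  using continuous_phi[of UNIV "\<lambda>x. x" a] by (simp add: continuous_on_eq_continuous_at)

lemma phi_integrable: "a > 0 \<Longrightarrow> integrable lborel (phi a)"
  unfolding phi_def[abs_def] by (rule integrable_normal_density)

definition gterm :: "real \<Rightarrow> nat \<Rightarrow> real \<Rightarrow> real" where
  "gterm a n x = phi a (x + real n) + phi a (x - real n - 1)"

definition G :: "real \<Rightarrow> real \<Rightarrow> real" where
  "G a x = (\<Sum>n. gterm a n x)"

lemma gterm_nonneg: "0 \<le> gterm a n x"
  by (simp add: gterm_def phi_nonneg)

lemma gterm_bound:
  assumes "a > 0" "x \<in> {0..1}" shows "gterm a n x \<le> 2 * phi a (real n)"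
proof -
  have "phi a (x + real n) \<le> phi a (real n)" using assms by (intro phi_mono) auto
  moreover have "phi a (x - real n - 1) \<le> phi a (real n)" using assms by (intro phi_mono) auto
  ultimately show ?thesis by (simp add: gterm_def)
qed

lemma gterm_summable:
  assumes "a > 0" "x \<in> {0..1}" shows "summable (\<lambda>n. gterm a n x)"
  by (rule summable_comparison_test[where g="\<lambda>n. 2 * phi a (real n)"])
     (use assms gterm_bound gterm_nonneg phi_summable in auto)

lemma G_sums: "a > 0 \<Longrightarrow> x \<in> {0..1} \<Longrightarrow> (\<lambda>n. gterm a n x) sums G a x"
  unfolding G_def using gterm_summable by (simp add: summable_sums)

lemma G_continuous:
  assumes "a > 0" shows "continuous_on {0..1} (G a)"
proof -
  have "uniform_limit {0..1} (\<lambda>n x. \<Sum>i<n. gterm a i x) (\<lambda>x. suminf (\<lambda>i. gterm a i x)) sequentially"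
    by (rule Weierstrass_m_test[where M="\<lambda>n. 2 * phi a (real n)"])
       (use assms gterm_bound gterm_nonneg phi_summable in auto)
  moreover have "\<forall>\<^sub>F n in sequentially. continuous_on {0..1} (\<lambda>x. \<Sum>i<n. gterm a i x)"
    unfolding gterm_def by (intro always_eventually allI continuous_intros)
  ultimately show ?thesis unfolding G_def[abs_def]
    by (intro uniform_limit_theorem) auto
qed

lemma G_measurable[measurable]: "G a \<in> borel_measurable borel"
  unfolding G_def[abs_def] gterm_def by measurable

lemma G_nonneg: "a > 0 \<Longrightarrow> x \<in> {0..1} \<Longrightarrow> 0 \<le> G a x"
  unfolding G_def using gterm_nonneg gterm_summable by (intro suminf_nonneg) auto

lemma gpartial_bound:
  assumes "a > 0" "x \<in> {0..1}"
  shows "(\<Sum>n<N. gterm a n x) \<le> (\<Sum>n. 2 * phi a (real n))"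
proof -
  have "(\<Sum>n<N. gterm a n x) \<le> (\<Sum>n<N. 2 * phi a (real n))"
    using assms by (intro sum_mono gterm_bound)
  also have "\<dots> \<le> (\<Sum>n. 2 * phi a (real n))"
    using assms phi_summable phi_nonneg by (intro sum_le_suminf summable_mult) auto
  finally show ?thesis .
qed

lemma int_ind01: "integrable lborel (\<lambda>x::real. indicator {a..b} x :: real)"
proof -
  have "integrable lborel (\<lambda>x::real. 1 * indicator {a..b} x :: real)"
    by (rule borel_integrable_atLeastAtMost) simp
  thus ?thesis by simp
qed

definition idx :: "real \<Rightarrow> nat" where
  "idx y = (if 0 \<le> y then nat \<lfloor>y\<rfloor> else nat (- \<lfloor>y\<rfloor> - 1))"

lemma ind_idx:
  "indicator {real n..<real n + 1} y + indicator {- real n - 1..<- real n} y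
     = (if n = idx y then 1 else (0::real))"
proof (cases "0 \<le> y")
  case True
  have "y \<in> {real n..<real n + 1} \<longleftrightarrow> \<lfloor>y\<rfloor> = int n" by (simp add: floor_eq_iff)
  also have "\<dots> \<longleftrightarrow> n = idx y" using True by (auto simp: idx_def)
  finally show ?thesis using True by (auto simp: indicator_def)
next
  case False
  have "y \<in> {- real n - 1..<- real n} \<longleftrightarrow> \<lfloor>y\<rfloor> = - int n - 1" by (simp add: floor_eq_iff)
  also have "\<dots> \<longleftrightarrow> n = idx y" using False by (auto simp: idx_def)
  finally show ?thesis using False by (auto simp: indicator_def)
qed

lemma L1:
  fixes h :: "real \<Rightarrow> real"
  assumes a: "a > 0" and hm[measurable]: "h \<in> borel_measurable borel"
    and hb: "\<And>y. \<bar>h y\<bar> \<le> B" and hp: "\<And>y (k::int). h (y + of_int k) = h y"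
  shows "(\<integral>y. phi a y * h y \<partial>lborel) = (\<integral>x. G a x * h x * indicator {0..<1} x \<partial>lborel)"
proof -
  define F where "F y = phi a y * h y" for y
  have Fm[measurable]: "F \<in> borel_measurable borel" unfolding F_def by measurable
  have B0: "0 \<le> B" using hb[of 0] by auto
  have Fint: "integrable lborel F"
  proof (rule Bochner_Integration.integrable_bound[where f="\<lambda>y. B * phi a y" and g=F])
    show "integrable lborel (\<lambda>y. B * phi a y)"
      using phi_integrable[OF a] by (intro integrable_mult_right)
    show "AE x in lborel. norm (F x) \<le> norm (B * phi a x)"
      using hb B0 by (intro AE_I2) (auto simp: F_def abs_mult phi_nonneg mult.commute[of B] intro!: mult_left_mono)
  qed simp
  define s where "s N y = (\<Sum>n<N. F y * indicator {real n..<real n + 1} y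
                                 + F y * indicator {- real n - 1..<- real n} y)" for N y
  have s_eq: "s N y = F y * (if idx y < N then 1 else 0)" for N y
  proof -
    have "s N y = F y * (\<Sum>n<N. indicator {real n..<real n + 1} y
                                 + indicator {- real n - 1..<- real n} y)"
      unfolding s_def by (simp add: sum_distrib_left algebra_simps)
    also have "\<dots> = F y * (\<Sum>n<N. if n = idx y then 1 else 0)"
      by (simp only: ind_idx)
    finally show ?thesis by (simp add: sum.delta')
  qed
  have intA: "integrable lborel (\<lambda>y. F y * indicator S y)" if [measurable]: "S \<in> sets borel" for S
    by (rule Bochner_Integration.integrable_bound[OF Fint]) (auto simp: indicator_def)
  have lim1: "(\<lambda>N. integral\<^sup>L lborel (s N)) \<longlonglongrightarrow> integral\<^sup>L lborel F"
  proof (rule integral_dominated_convergence[where w="\<lambda>y. norm (F y)"])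
    show "integrable lborel (\<lambda>y. norm (F y))" using Fint by simp
    show "s N \<in> borel_measurable lborel" for N unfolding s_def by measurable
    show "AE x in lborel. (\<lambda>N. s N x) \<longlonglongrightarrow> F x"
    proof (intro AE_I2)
      fix x
      have "eventually (\<lambda>N. s N x = F x) sequentially"
        using eventually_gt_at_top[of "idx x"] by eventually_elim (simp add: s_eq)
      thus "(\<lambda>N. s N x) \<longlonglongrightarrow> F x" by (rule tendsto_eventually)
    qed
    show "AE x in lborel. norm (s N x) \<le> norm (F x)" for N
      by (intro AE_I2) (simp add: s_eq)
  qed simp
  have transA: "(\<integral>y. F y * indicator {real n..<real n + 1} y \<partial>lborel)
      = (\<integral>x. phi a (x + real n) * h x * indicator {0..<1} x \<partial>lborel)" for n
  proof -
    have "(\<integral>y. F y * indicator {real n..<real n + 1} y \<partial>lborel)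
        = (\<integral>x. F (real n + 1 * x) * indicator {real n..<real n + 1} (real n + 1 * x) \<partial>lborel)"
      using lborel_integral_real_affine[of 1 "\<lambda>y. F y * indicator {real n..<real n + 1} y" "real n"]
      by simp
    also have "\<dots> = (\<integral>x. phi a (x + real n) * h x * indicator {0..<1} x \<partial>lborel)"
    proof (rule Bochner_Integration.integral_cong[OF refl])
      fix x
      have "h (x + of_int (int n)) = h x" by (rule hp)
      thus "F (real n + 1 * x) * indicator {real n..<real n + 1} (real n + 1 * x)
          = phi a (x + real n) * h x * indicator {0..<1} x"
        by (auto simp: F_def indicator_def add.commute)
    qed
    finally show ?thesis .
  qed
  have transB: "(\<integral>y. F y * indicator {- real n - 1..<- real n} y \<partial>lborel)
      = (\<integral>x. phi a (x - real n - 1) * h x * indicator {0..<1} x \<partial>lborel)" for n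
  proof -
    have "(\<integral>y. F y * indicator {- real n - 1..<- real n} y \<partial>lborel)
        = (\<integral>x. F (- real n - 1 + 1 * x) * indicator {- real n - 1..<- real n} (- real n - 1 + 1 * x) \<partial>lborel)"
      using lborel_integral_real_affine[of 1 "\<lambda>y. F y * indicator {- real n - 1..<- real n} y" "- real n - 1"]
      by simp
    also have "\<dots> = (\<integral>x. phi a (x - real n - 1) * h x * indicator {0..<1} x \<partial>lborel)"
    proof (rule Bochner_Integration.integral_cong[OF refl])
      fix x
      have "h (x + of_int (- int n - 1)) = h x" by (rule hp)
      thus "F (- real n - 1 + 1 * x) * indicator {- real n - 1..<- real n} (- real n - 1 + 1 * x)
          = phi a (x - real n - 1) * h x * indicator {0..<1} x"
        by (auto simp: F_def indicator_def algebra_simps)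
    qed
    finally show ?thesis .
  qed
  define t where "t N x = (\<Sum>n<N. gterm a n x) * h x * indicator {0..<1} x" for N x
  have intT: "integrable lborel (\<lambda>x. phi a (x + c) * h x * indicator {0..<1} x)" for c
  proof (rule Bochner_Integration.integrable_bound[where f="\<lambda>x. (B * phi a (x + c))"])
    show "integrable lborel (\<lambda>x. B * phi a (x + c))"
      using lborel_integrable_real_affine[of "phi a" 1 c] phi_integrable[OF a]
      by (intro integrable_mult_right) (simp add: add.commute)
    show "AE x in lborel. norm (phi a (x + c) * h x * indicator {0..<1} x) \<le> norm (B * phi a (x + c))"
      using hb B0 by (intro AE_I2) (auto simp: abs_mult phi_nonneg indicator_def mult.commute[of B] intro!: mult_left_mono)
  qed simp
  have s_int: "integral\<^sup>L lborel (s N) = integral\<^sup>L lborel (t N)" for N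
  proof -
    have "integral\<^sup>L lborel (s N) = (\<Sum>n<N. (\<integral>y. F y * indicator {real n..<real n + 1} y \<partial>lborel)
               + (\<integral>y. F y * indicator {- real n - 1..<- real n} y \<partial>lborel))"
      unfolding s_def
      by (subst Bochner_Integration.integral_sum)
         (auto intro!: Bochner_Integration.integrable_add intA sum.cong Bochner_Integration.integral_add)
    also have "\<dots> = (\<Sum>n<N. (\<integral>x. phi a (x + real n) * h x * indicator {0..<1} x \<partial>lborel)
               + (\<integral>x. phi a (x - real n - 1) * h x * indicator {0..<1} x \<partial>lborel))"
      by (simp only: transA transB)
    also have "\<dots> = (\<Sum>n<N. (\<integral>x. gterm a n x * h x * indicator {0..<1} x \<partial>lborel))"
    proof (rule sum.cong[OF refl])
      fix n
      have e: "\<And>x. x - real n - 1 = x + (- real n - 1)" by simp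
      have i2: "integrable lborel (\<lambda>x. phi a (x - real n - 1) * h x * indicator {0..<1} x)"
        using intT[of "- real n - 1"] by (simp only: e)
      show "(\<integral>x. phi a (x + real n) * h x * indicator {0..<1} x \<partial>lborel)
               + (\<integral>x. phi a (x - real n - 1) * h x * indicator {0..<1} x \<partial>lborel)
            = (\<integral>x. gterm a n x * h x * indicator {0..<1} x \<partial>lborel)"
        using intT[of "real n"] i2
        by (subst Bochner_Integration.integral_add[symmetric]) (auto simp: gterm_def algebra_simps)
    qed
    also have "\<dots> = integral\<^sup>L lborel (t N)"
      unfolding t_def
    proof (subst Bochner_Integration.integral_sum[symmetric])
      fix n
      have e: "\<And>x. x - real n - 1 = x + (- real n - 1)" by simp
      have i2: "integrable lborel (\<lambda>x. phi a (x - real n - 1) * h x * indicator {0..<1} x)"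
        using intT[of "- real n - 1"] by (simp only: e)
      show "integrable lborel (\<lambda>x. gterm a n x * h x * indicator {0..<1} x)"
        using intT[of "real n"] i2
        by (auto simp: gterm_def distrib_right intro!: integrable_add)
    qed (simp add: sum_distrib_right)
    finally show ?thesis .
  qed
  define C where "C = (\<Sum>n. 2 * phi a (real n))"
  have C0: "0 \<le> C" unfolding C_def using phi_summable[OF a] phi_nonneg
    by (intro suminf_nonneg summable_mult) auto
  have lim2: "(\<lambda>N. integral\<^sup>L lborel (t N)) \<longlonglongrightarrow> (\<integral>x. G a x * h x * indicator {0..<1} x \<partial>lborel)"
  proof (rule integral_dominated_convergence[where w="\<lambda>x::real. C * B * indicator {0..1::real} x"])
    show "integrable lborel (\<lambda>x. C * B * indicator {0..1::real} x)"
      using int_ind01[of 0 1] by (intro integrable_mult_right)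
    show "t N \<in> borel_measurable lborel" for N unfolding t_def gterm_def by measurable
    show "AE x in lborel. (\<lambda>N. t N x) \<longlonglongrightarrow> G a x * h x * indicator {0..<1} x"
    proof (intro AE_I2)
      fix x
      show "(\<lambda>N. t N x) \<longlonglongrightarrow> G a x * h x * indicator {0..<1} x"
      proof (cases "x \<in> {0..<1}")
        case True
        then have "(\<lambda>N. \<Sum>n<N. gterm a n x) \<longlonglongrightarrow> G a x"
          using G_sums[OF a, of x] by (simp add: sums_def)
        then show ?thesis unfolding t_def by (intro tendsto_intros)
      qed (simp add: t_def)
    qed
    show "AE x in lborel. norm (t N x) \<le> C * B * indicator {0..1::real} x" for N
    proof (intro AE_I2)
      fix x
      show "norm (t N x) \<le> C * B * indicator {0..1::real} x"
      proof (cases "x \<in> {0..<1}")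
        case True
        then have "\<bar>\<Sum>n<N. gterm a n x\<bar> \<le> C"
          using gpartial_bound[OF a, of x N] gterm_nonneg unfolding C_def
          by (subst abs_of_nonneg) (auto intro: sum_nonneg)
        then show ?thesis using True hb[of x] B0 unfolding t_def
          by (auto simp: abs_mult intro!: mult_mono)
      qed (use C0 B0 in \<open>auto simp: t_def indicator_def\<close>)
    qed
  qed simp
  have "integral\<^sup>L lborel F = (\<integral>x. G a x * h x * indicator {0..<1} x \<partial>lborel)"
    using LIMSEQ_unique[OF lim1] lim2 s_int by simp
  thus ?thesis unfolding F_def .
qed

lemma std_char_int: "integrable lborel (\<lambda>x. std_normal_density x *\<^sub>R iexp (t * x))"
proof (rule Bochner_Integration.integrable_bound[where f="std_normal_density"])
  show "integrable lborel std_normal_density" by (rule integrable_normal_density) simp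
  show "AE x in lborel. norm (std_normal_density x *\<^sub>R iexp (t * x)) \<le> norm (std_normal_density x)"
    by (intro AE_I2) (simp add: norm_exp_i_times)
qed measurable

lemma std_char_eq: "(\<integral>x. std_normal_density x *\<^sub>R iexp (t * x) \<partial>lborel) = complex_of_real (exp (- (t^2) / 2))"
proof -
  have "char std_normal_distribution t = (\<integral>x. std_normal_density x *\<^sub>R iexp (t * x) \<partial>lborel)"
    unfolding char_def by (subst integral_density) auto
  thus ?thesis using char_std_normal_distribution by metis
qed

lemma std_cos: "(\<integral>z. std_normal_density z * cos (t * z) \<partial>lborel) = exp (- (t^2) / 2)"
proof -
  have "Re (\<integral>x. std_normal_density x *\<^sub>R iexp (t * x) \<partial>lborel)
      = (\<integral>x. Re (std_normal_density x *\<^sub>R iexp (t * x)) \<partial>lborel)"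
    by (rule integral_Re[symmetric, OF std_char_int])
  also have "\<dots> = (\<integral>z. std_normal_density z * cos (t * z) \<partial>lborel)"
    by (simp add: Re_exp)
  finally show ?thesis using std_char_eq[of t] by simp
qed

lemma std_sin: "(\<integral>z. std_normal_density z * sin (t * z) \<partial>lborel) = 0"
proof -
  have "Im (\<integral>x. std_normal_density x *\<^sub>R iexp (t * x) \<partial>lborel)
      = (\<integral>x. Im (std_normal_density x *\<^sub>R iexp (t * x)) \<partial>lborel)"
    by (rule integral_Im[symmetric, OF std_char_int])
  also have "\<dots> = (\<integral>z. std_normal_density z * sin (t * z) \<partial>lborel)"
    by (simp add: Im_exp)
  finally show ?thesis using std_char_eq[of t] by simp
qed

lemma phi_scale:
  assumes a: "a > 0"
  shows "(\<integral>y. phi a y * f y \<partial>lborel) = (\<integral>z. std_normal_density z * f (a * z) \<partial>lborel)"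
proof -
  have "(\<integral>y. phi a y * f y \<partial>lborel) = \<bar>a\<bar> *\<^sub>R (\<integral>z. phi a (0 + a * z) * f (0 + a * z) \<partial>lborel)"
    using a by (intro lborel_integral_real_affine) simp
  also have "\<dots> = (\<integral>z. a * (phi a (a * z) * f (a * z)) \<partial>lborel)" using a by simp
  also have "\<dots> = (\<integral>z. std_normal_density z * f (a * z) \<partial>lborel)"
  proof (rule Bochner_Integration.integral_cong[OF refl])
    fix z
    have "a * phi a (a * z) = std_normal_density z"
      using a unfolding phi_def normal_density_def
      by (simp add: real_sqrt_mult power_mult_distrib field_simps)
    thus "a * (phi a (a * z) * f (a * z)) = std_normal_density z * f (a * z)" by simp
  qed
  finally show ?thesis .
qed

lemma cos_per: "cos (2 * pi * real k * (y + of_int m)) = cos (2 * pi * real k * y)"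
proof -
  have "2 * pi * real k * (y + of_int m) = 2 * pi * real k * y + (2 * pi) * of_int (int k * m)"
    by (simp add: algebra_simps)
  moreover have "cos ((2 * pi) * of_int (int k * m)) = 1" by (rule cos_int_2pin)
  moreover have "sin ((2 * pi) * of_int (int k * m)) = 0" by (rule sin_int_2pin)
  ultimately show ?thesis by (simp only: cos_add)
qed

lemma sin_per: "sin (2 * pi * real k * (y + of_int m)) = sin (2 * pi * real k * y)"
proof -
  have "2 * pi * real k * (y + of_int m) = 2 * pi * real k * y + (2 * pi) * of_int (int k * m)"
    by (simp add: algebra_simps)
  moreover have "cos ((2 * pi) * of_int (int k * m)) = 1" by (rule cos_int_2pin)
  moreover have "sin ((2 * pi) * of_int (int k * m)) = 0" by (rule sin_int_2pin)
  ultimately show ?thesis by (simp only: sin_add)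
qed

lemma FG_cos:
  assumes a: "a > 0"
  shows "(\<integral>x. G a x * cos (2 * pi * real k * x) * indicator {0..<1} x \<partial>lborel)
       = exp (- 2 * pi\<^sup>2 * a\<^sup>2 * (real k)\<^sup>2)"
proof -
  have "(\<integral>x. G a x * cos (2 * pi * real k * x) * indicator {0..<1} x \<partial>lborel)
      = (\<integral>y. phi a y * cos (2 * pi * real k * y) \<partial>lborel)"
    by (rule L1[OF a, symmetric, where B=1]) (auto simp: cos_per)
  also have "\<dots> = (\<integral>z. std_normal_density z * cos ((2 * pi * real k * a) * z) \<partial>lborel)"
    using phi_scale[OF a] by (simp add: mult.assoc mult.left_commute)
  also have "\<dots> = exp (- 2 * pi\<^sup>2 * a\<^sup>2 * (real k)\<^sup>2)"
    by (simp add: std_cos power_mult_distrib)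
  finally show ?thesis .
qed

lemma FG_sin:
  assumes a: "a > 0"
  shows "(\<integral>x. G a x * sin (2 * pi * real k * x) * indicator {0..<1} x \<partial>lborel) = 0"
proof -
  have "(\<integral>x. G a x * sin (2 * pi * real k * x) * indicator {0..<1} x \<partial>lborel)
      = (\<integral>y. phi a y * sin (2 * pi * real k * y) \<partial>lborel)"
    by (rule L1[OF a, symmetric, where B=1]) (auto simp: sin_per)
  also have "\<dots> = (\<integral>z. std_normal_density z * sin ((2 * pi * real k * a) * z) \<partial>lborel)"
    using phi_scale[OF a] by (simp add: mult.assoc mult.left_commute)
  also have "\<dots> = 0"
    by (simp add: std_sin)
  finally show ?thesis .
qed

lemma int01: "continuous_on {0..1} (f::real\<Rightarrow>real) \<Longrightarrow> integrable lborel (\<lambda>x::real. f x * indicator {0..1} x)"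
  using borel_integrable_atLeastAtMost'[of 0 1 f] unfolding set_integrable_def
  by (simp add: mult.commute)

lemma ftc01:
  assumes "\<And>x. (F has_real_derivative f x) (at x)" "continuous_on {0..1} f"
  shows "(\<integral>x. f x * indicator {0..1} x \<partial>lborel) = F 1 - F (0::real)"
proof -
  have "(\<integral>x. indicator {0..1} x *\<^sub>R f x \<partial>lborel) = F 1 - F 0"
    by (rule integral_FTC_atLeastAtMost)
       (use assms in \<open>auto simp: has_real_derivative_iff_has_vector_derivative[symmetric] intro: has_field_derivative_at_within\<close>)
  thus ?thesis by (simp add: mult.commute)
qed

lemma I_cos:
  fixes n :: int
  shows "(\<integral>x. cos (2 * pi * of_int n * x) * indicator {0..1} x \<partial>lborel) = (if n = 0 then 1 else 0)"
proof (cases "n = 0")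
  case True
  have "(\<integral>x. 1 * indicator {0..1::real} x \<partial>lborel) = (\<lambda>x. x) 1 - (\<lambda>x. x) (0::real)"
    by (rule ftc01[where F="\<lambda>x. x" and f="\<lambda>x. 1"]) (auto intro!: derivative_eq_intros continuous_intros)
  thus ?thesis using True by simp
next
  case False
  have "(\<integral>x. cos (2 * pi * of_int n * x) * indicator {0..1} x \<partial>lborel)
      = (\<lambda>x. sin (2 * pi * of_int n * x) / (2 * pi * of_int n)) 1 - (\<lambda>x. sin (2 * pi * of_int n * x) / (2 * pi * of_int n)) 0"
    by (rule ftc01[where F="\<lambda>x. sin (2 * pi * of_int n * x) / (2 * pi * of_int n)"]) (use False in \<open>auto intro!: derivative_eq_intros continuous_intros\<close>)
  also have "\<dots> = 0" using sin_int_2pin[of n] by simp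
  finally show ?thesis using False by simp
qed

lemma I_sin:
  fixes n :: int
  shows "(\<integral>x. sin (2 * pi * of_int n * x) * indicator {0..1} x \<partial>lborel) = 0"
proof (cases "n = 0")
  case True
  thus ?thesis by simp
next
  case False
  have "(\<integral>x. sin (2 * pi * of_int n * x) * indicator {0..1} x \<partial>lborel)
      = (\<lambda>x. - cos (2 * pi * of_int n * x) / (2 * pi * of_int n)) 1 - (\<lambda>x. - cos (2 * pi * of_int n * x) / (2 * pi * of_int n)) 0"
    by (rule ftc01[where F="\<lambda>x. - cos (2 * pi * of_int n * x) / (2 * pi * of_int n)"]) (use False in \<open>auto intro!: derivative_eq_intros continuous_intros\<close>)
  also have "\<dots> = 0" using cos_int_2pin[of n] by simp
  finally show ?thesis .
qed

lemma I_cos_cos: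
  fixes j k :: nat
  shows "(\<integral>x. cos (2 * pi * real j * x) * cos (2 * pi * real k * x) * indicator {0..1} x \<partial>lborel)
     = (if j = k then (if k = 0 then 1 else 1/2) else 0)"
proof -
  have e: "cos (2 * pi * real j * x) * cos (2 * pi * real k * x) * indicator {0..1} x
     = (cos (2 * pi * of_int (int j - int k) * x) * indicator {0..1} x
       + cos (2 * pi * of_int (int j + int k) * x) * indicator {0..1} x) / 2" for x
    by (simp add: cos_times_cos algebra_simps)
  have "(\<integral>x. cos (2 * pi * real j * x) * cos (2 * pi * real k * x) * indicator {0..1} x \<partial>lborel)
     = ((\<integral>x. cos (2 * pi * of_int (int j - int k) * x) * indicator {0..1} x \<partial>lborel)
       + (\<integral>x. cos (2 * pi * of_int (int j + int k) * x) * indicator {0..1} x \<partial>lborel)) / 2"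
    unfolding e
    by (subst Bochner_Integration.integral_add[symmetric])
       (auto intro!: int01 continuous_intros)
  also have "\<dots> = (if j = k then (if k = 0 then 1 else 1/2) else 0)"
    unfolding I_cos by auto
  finally show ?thesis .
qed

lemma I_cos_sin:
  fixes j k :: nat
  shows "(\<integral>x. cos (2 * pi * real j * x) * sin (2 * pi * real k * x) * indicator {0..1} x \<partial>lborel) = 0"
proof -
  have e: "cos (2 * pi * real j * x) * sin (2 * pi * real k * x) * indicator {0..1} x
     = (sin (2 * pi * of_int (int j + int k) * x) * indicator {0..1} x
       - sin (2 * pi * of_int (int j - int k) * x) * indicator {0..1} x) / 2" for x
    by (simp add: cos_times_sin algebra_simps)
  have "(\<integral>x. cos (2 * pi * real j * x) * sin (2 * pi * real k * x) * indicator {0..1} x \<partial>lborel)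
     = ((\<integral>x. sin (2 * pi * of_int (int j + int k) * x) * indicator {0..1} x \<partial>lborel)
       - (\<integral>x. sin (2 * pi * of_int (int j - int k) * x) * indicator {0..1} x \<partial>lborel)) / 2"
    unfolding e
    by (subst Bochner_Integration.integral_diff[symmetric])
       (auto intro!: int01 continuous_intros)
  also have "\<dots> = 0"
    unfolding I_sin by auto
  finally show ?thesis .
qed

definition w :: "real \<Rightarrow> nat \<Rightarrow> real" where
  "w a m = (if m = 0 then 1 else 2) * exp (- 2 * pi\<^sup>2 * a\<^sup>2 * (real m)\<^sup>2)"

definition Th :: "real \<Rightarrow> real \<Rightarrow> real" where
  "Th a x = (\<Sum>m. w a m * cos (2 * pi * real m * x))"

lemma w_bound:
  assumes "a > 0" shows "\<bar>w a m\<bar> \<le> 2 * exp (- 2 * pi\<^sup>2 * a\<^sup>2) ^ m"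
proof -
  have "real m \<le> (real m)\<^sup>2" by (cases m) (auto simp: power2_eq_square)
  hence h: "2 * pi\<^sup>2 * a\<^sup>2 * real m \<le> 2 * pi\<^sup>2 * a\<^sup>2 * (real m)\<^sup>2"
    by (intro mult_left_mono) auto
  have "- 2 * pi\<^sup>2 * a\<^sup>2 * (real m)\<^sup>2 \<le> real m * (- 2 * pi\<^sup>2 * a\<^sup>2)"
    using h by (simp add: algebra_simps)
  hence "exp (- 2 * pi\<^sup>2 * a\<^sup>2 * (real m)\<^sup>2) \<le> exp (- 2 * pi\<^sup>2 * a\<^sup>2) ^ m"
    by (simp add: exp_of_nat_mult[symmetric])
  thus ?thesis by (auto simp: w_def)
qed

lemma r_lt1: "a > 0 \<Longrightarrow> exp (- 2 * pi\<^sup>2 * a\<^sup>2) < 1"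
  by simp

lemma w_term_bound:
  assumes "a > 0" shows "norm (w a m * cos (2 * pi * real m * x)) \<le> 2 * exp (- 2 * pi\<^sup>2 * a\<^sup>2) ^ m"
proof -
  have "\<bar>w a m * cos (2 * pi * real m * x)\<bar> \<le> \<bar>w a m\<bar> * 1"
    unfolding abs_mult by (intro mult_left_mono) auto
  thus ?thesis using w_bound[OF assms, of m] by simp
qed

lemma geo_summable: "a > 0 \<Longrightarrow> summable (\<lambda>m. 2 * exp (- 2 * pi\<^sup>2 * a\<^sup>2) ^ m)"
  by (intro summable_mult summable_geometric) simp

lemma Th_summable: "a > 0 \<Longrightarrow> summable (\<lambda>m. w a m * cos (2 * pi * real m * x))"
  by (rule summable_comparison_test'[OF geo_summable w_term_bound]) auto

lemma Th_continuous:
  assumes "a > 0" shows "continuous_on S (Th a)"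
proof -
  have "uniform_limit S (\<lambda>n x. \<Sum>i<n. w a i * cos (2 * pi * real i * x)) (\<lambda>x. suminf (\<lambda>i. w a i * cos (2 * pi * real i * x))) sequentially"
    by (rule Weierstrass_m_test[OF _ geo_summable[OF assms]]) (rule w_term_bound[OF assms])
  moreover have "\<forall>\<^sub>F n in sequentially. continuous_on S (\<lambda>x. \<Sum>i<n. w a i * cos (2 * pi * real i * x))"
    by (intro always_eventually allI continuous_intros)
  ultimately show ?thesis unfolding Th_def[abs_def]
    by (intro uniform_limit_theorem) auto
qed

lemma Th_measurable[measurable]: "Th a \<in> borel_measurable borel"
  unfolding Th_def[abs_def] by measurable

lemma Th_bound:
  assumes a: "a > 0"
  shows "\<bar>Th a x - 1\<bar> \<le> 2 * exp (- 2 * pi\<^sup>2 * a\<^sup>2) / (1 - exp (- 2 * pi\<^sup>2 * a\<^sup>2))"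
proof -
  define r where "r = exp (- 2 * pi\<^sup>2 * a\<^sup>2)"
  have r: "0 < r" "r < 1" using a by (auto simp: r_def)
  define f where "f m = w a m * cos (2 * pi * real m * x)" for m
  have sf: "summable f" unfolding f_def using Th_summable[OF a] .
  have f0: "f 0 = 1" by (simp add: f_def w_def)
  have "Th a x = suminf f" by (simp add: Th_def f_def[abs_def])
  hence "Th a x - 1 = (\<Sum>m. f (Suc m))"
    using suminf_split_head[OF sf] f0 by simp
  moreover have "\<bar>\<Sum>m. f (Suc m)\<bar> \<le> (\<Sum>m. 2 * r ^ Suc m)"
  proof -
    have s2: "summable (\<lambda>m. 2 * r ^ Suc m)" using r by (intro summable_mult summable_geometric_iff[THEN iffD2] summable_Suc_iff[THEN iffD2]) auto
    have fb: "\<bar>f (Suc m)\<bar> \<le> 2 * r ^ Suc m" for m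
      using w_term_bound[OF a, of "Suc m" x] unfolding f_def r_def real_norm_def .
    have s3: "summable (\<lambda>m. \<bar>f (Suc m)\<bar>)"
      by (rule summable_comparison_test'[OF s2]) (use fb in auto)
    have "\<bar>\<Sum>m. f (Suc m)\<bar> \<le> (\<Sum>m. \<bar>f (Suc m)\<bar>)"
      by (rule summable_rabs) (use s3 in simp)
    also have "\<dots> \<le> (\<Sum>m. 2 * r ^ Suc m)"
      by (rule suminf_le) (use fb s2 s3 in auto)
    finally show ?thesis .
  qed
  moreover have "(\<Sum>m. 2 * r ^ Suc m) = 2 * r / (1 - r)"
  proof -
    have "(\<lambda>m. r ^ m) sums (1 / (1 - r))" using r by (intro geometric_sums) auto
    hence "(\<lambda>m. (2 * r) * r ^ m) sums ((2 * r) * (1 / (1 - r)))" by (rule sums_mult)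
    hence "(\<lambda>m. 2 * r ^ Suc m) sums (2 * r / (1 - r))" by (simp add: mult.assoc)
    thus ?thesis by (rule sums_unique[symmetric])
  qed
  ultimately show ?thesis by (simp add: r_def)
qed

lemma int_ind01_eq: "(\<integral>x. (c::real) * indicator {0..1::real} x \<partial>lborel) = c"
proof -
  have "(\<integral>x. c * indicator {0..1::real} x \<partial>lborel) = (\<lambda>x. c * x) 1 - (\<lambda>x. c * x) (0::real)"
    by (rule ftc01[where F="\<lambda>x. c*x" and f="\<lambda>x. c"]) (auto intro!: derivative_eq_intros)
  thus ?thesis by simp
qed

lemma FTh_gen:
  assumes a: "a > 0" and cg: "continuous_on UNIV g" and bg: "\<And>x. \<bar>g x\<bar> \<le> 1"
  and c: "\<And>m. (\<integral>x. cos (2 * pi * real m * x) * g x * indicator {0..1} x \<partial>lborel) = v m"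
  shows "(\<lambda>m. w a m * v m) sums (\<integral>x. Th a x * (g x * indicator {0..1} x) \<partial>lborel)"
proof -
  define r where "r = exp (- 2 * pi\<^sup>2 * a\<^sup>2)"
  define f where "f m x = w a m * cos (2 * pi * real m * x) * (g x * indicator {0..1} x)" for m x
  have fb: "norm (f m x) \<le> 2 * r ^ m * indicator {0..1} x" for m x
  proof -
    have "norm (f m x) = norm (w a m * cos (2 * pi * real m * x)) * (\<bar>g x\<bar> * indicator {0..1} x)"
      by (simp add: f_def abs_mult)
    also have "\<dots> \<le> 2 * r ^ m * (1 * indicator {0..1} x)"
      using w_term_bound[OF a, of m x] bg[of x] unfolding r_def
      by (intro mult_mono) (auto simp: indicator_def)
    finally show ?thesis by simp
  qed
  have fint: "integrable lborel (f m)" for m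
  proof -
    have "integrable lborel (\<lambda>x. (w a m * cos (2 * pi * real m * x) * g x) * indicator {0..1} x)"
      using cg by (intro int01 continuous_intros) (auto intro: continuous_on_subset)
    thus ?thesis unfolding f_def by (simp add: mult.assoc)
  qed
  have sg: "summable (\<lambda>m. 2 * r ^ m)" using geo_summable[OF a] by (simp add: r_def)
  have "(\<lambda>m. integral\<^sup>L lborel (f m)) sums (\<integral>x. (\<Sum>m. f m x) \<partial>lborel)"
  proof (rule sums_integral[OF fint])
    show "AE x in lborel. summable (\<lambda>m. norm (f m x))"
    proof (rule AE_I2)
      fix x
      show "summable (\<lambda>m. norm (f m x))"
        by (rule summable_comparison_test'[OF summable_mult2[OF sg, of "indicator {0..1} x"]])
           (use fb in \<open>metis norm_ge_zero real_norm_def abs_of_nonneg\<close>)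
    qed
    show "summable (\<lambda>m. \<integral>x. norm (f m x) \<partial>lborel)"
    proof (rule summable_comparison_test'[OF sg])
      fix m
      have i2: "integrable lborel (\<lambda>x. 2 * r ^ m * indicator {0..1::real} x)"
        by (rule integrable_mult_right[OF int_ind01])
      have "(\<integral>x. norm (f m x) \<partial>lborel) \<le> (\<integral>x. 2 * r ^ m * indicator {0..1::real} x \<partial>lborel)"
        by (rule Bochner_Integration.integral_mono[OF integrable_norm[OF fint] i2]) (rule fb)
      also have "\<dots> = 2 * r ^ m" by (rule int_ind01_eq)
      finally show "norm (\<integral>x. norm (f m x) \<partial>lborel) \<le> 2 * r ^ m"
        by (simp add: integral_nonneg_AE)
    qed
  qed
  moreover have "integral\<^sup>L lborel (f m) = w a m * v m" for m
  proof -
    have "integral\<^sup>L lborel (f m) = (\<integral>x. w a m * (cos (2 * pi * real m * x) * g x * indicator {0..1} x) \<partial>lborel)"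
      unfolding f_def by (simp add: mult.assoc)
    also have "\<dots> = w a m * v m" by (simp add: c)
    finally show ?thesis .
  qed
  moreover have "(\<Sum>m. f m x) = Th a x * (g x * indicator {0..1} x)" for x
    unfolding f_def Th_def using Th_summable[OF a, of x] by (simp add: suminf_mult2)
  ultimately show ?thesis by simp
qed

lemma FTh_cos:
  assumes a: "a > 0"
  shows "(\<integral>x. Th a x * cos (2 * pi * real k * x) * indicator {0..1} x \<partial>lborel) = exp (- 2 * pi\<^sup>2 * a\<^sup>2 * (real k)\<^sup>2)"
proof -
  have s1: "(\<lambda>m. w a m * (if m = k then (if k = 0 then 1 else 1/2) else 0)) sums
     (\<integral>x. Th a x * (cos (2 * pi * real k * x) * indicator {0..1} x) \<partial>lborel)"
  proof (rule FTh_gen[OF a])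
    show "continuous_on UNIV (\<lambda>x. cos (2 * pi * real k * x))" by (intro continuous_intros)
  qed (simp_all add: I_cos_cos)
  have e2: "(\<lambda>m. w a m * (if m = k then (if k = 0 then 1 else 1/2) else 0))
      = (\<lambda>m. if m = k then w a k * (if k = 0 then 1 else 1/2) else 0)" by auto
  have e3: "w a k * (if k = 0 then 1 else 1/2) = exp (- 2 * pi\<^sup>2 * a\<^sup>2 * (real k)\<^sup>2)"
    by (simp add: w_def)
  have "(\<lambda>m. if m = k then exp (- 2 * pi\<^sup>2 * a\<^sup>2 * (real k)\<^sup>2) else 0) sums
     (\<integral>x. Th a x * (cos (2 * pi * real k * x) * indicator {0..1} x) \<partial>lborel)"
    using s1 unfolding e2 e3 .
  hence "(\<integral>x. Th a x * (cos (2 * pi * real k * x) * indicator {0..1} x) \<partial>lborel) = exp (- 2 * pi\<^sup>2 * a\<^sup>2 * (real k)\<^sup>2)"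
    by (rule sums_unique2[OF _ sums_single[of k "\<lambda>_. exp (- 2 * pi\<^sup>2 * a\<^sup>2 * (real k)\<^sup>2)"]])
  thus ?thesis by (simp add: mult.assoc)
qed

lemma FTh_sin:
  assumes a: "a > 0"
  shows "(\<integral>x. Th a x * sin (2 * pi * real k * x) * indicator {0..1} x \<partial>lborel) = 0"
proof -
  have "(\<lambda>m. w a m * 0) sums
     (\<integral>x. Th a x * (sin (2 * pi * real k * x) * indicator {0..1} x) \<partial>lborel)"
  proof (rule FTh_gen[OF a])
    show "continuous_on UNIV (\<lambda>x. sin (2 * pi * real k * x))" by (intro continuous_intros)
  qed (simp_all add: I_cos_sin)
  hence "(\<integral>x. Th a x * (sin (2 * pi * real k * x) * indicator {0..1} x) \<partial>lborel) = 0"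
    using sums_unique2[OF _ sums_zero] by simp
  thus ?thesis by (simp add: mult.assoc)
qed

inductive trig :: "(real \<Rightarrow> real) \<Rightarrow> bool" where
  tc: "trig (\<lambda>x. c * cos (2 * pi * of_int k * x))"
| ts: "trig (\<lambda>x. c * sin (2 * pi * of_int k * x))"
| tadd: "trig f \<Longrightarrow> trig g \<Longrightarrow> trig (\<lambda>x. f x + g x)"

lemma trig_cont: "trig f \<Longrightarrow> continuous_on S f"
  by (induction rule: trig.induct) (auto intro!: continuous_intros)

lemma trig_const: "trig (\<lambda>x. c)"
proof -
  have "trig (\<lambda>x. c * cos (2 * pi * of_int 0 * x))" by (rule tc)
  thus ?thesis by simp
qed

lemma arg_add: "2 * pi * of_int k * x + 2 * pi * of_int j * x = 2 * pi * of_int (k + j) * (x::real)"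
  by (simp add: algebra_simps)
lemma arg_diff: "2 * pi * of_int k * x - 2 * pi * of_int j * x = 2 * pi * of_int (k - j) * (x::real)"
  by (simp add: algebra_simps)

lemma alg1: "u * v = (A + B) / 2 \<Longrightarrow> c * u * (d * v) = c * d / 2 * A + c * d / 2 * (B::real)"
proof -
  assume h: "u * v = (A + B) / 2"
  have "c * u * (d * v) = c * d * (u * v)" by (simp add: mult_ac)
  also have "\<dots> = c * d / 2 * A + c * d / 2 * B" unfolding h by (simp add: algebra_simps)
  finally show ?thesis .
qed

lemma alg2: "u * v = (A - B) / 2 \<Longrightarrow> c * u * (d * v) = c * d / 2 * A + (- c * d / 2) * (B::real)"
proof -
  assume h: "u * v = (A - B) / 2"
  have "c * u * (d * v) = c * d * (u * v)" by (simp add: mult_ac)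
  also have "\<dots> = c * d / 2 * A + (- c * d / 2) * B" unfolding h by (simp add: field_simps)
  finally show ?thesis .
qed

lemma trig_cc: "trig (\<lambda>x. c * cos (2 * pi * of_int k * x) * (d * cos (2 * pi * of_int j * x)))"
proof -
  have "(\<lambda>x. c * cos (2 * pi * of_int k * x) * (d * cos (2 * pi * of_int j * x)))
      = (\<lambda>x. (c * d / 2) * cos (2 * pi * of_int (k - j) * x) + (c * d / 2) * cos (2 * pi * of_int (k + j) * x))"
  proof
    fix x
    have "cos (2 * pi * of_int k * x) * cos (2 * pi * of_int j * x)
        = (cos (2 * pi * of_int (k - j) * x) + cos (2 * pi * of_int (k + j) * x)) / 2"
      unfolding cos_times_cos arg_add arg_diff ..
    thus "c * cos (2 * pi * of_int k * x) * (d * cos (2 * pi * of_int j * x))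
      = (c * d / 2) * cos (2 * pi * of_int (k - j) * x) + (c * d / 2) * cos (2 * pi * of_int (k + j) * x)"
      by (rule alg1)
  qed
  thus ?thesis by (metis (no_types) tadd tc)
qed

lemma trig_cs: "trig (\<lambda>x. c * cos (2 * pi * of_int k * x) * (d * sin (2 * pi * of_int j * x)))"
proof -
  have "(\<lambda>x. c * cos (2 * pi * of_int k * x) * (d * sin (2 * pi * of_int j * x)))
      = (\<lambda>x. (c * d / 2) * sin (2 * pi * of_int (k + j) * x) + (- c * d / 2) * sin (2 * pi * of_int (k - j) * x))"
  proof
    fix x
    have "cos (2 * pi * of_int k * x) * sin (2 * pi * of_int j * x)
        = (sin (2 * pi * of_int (k + j) * x) - sin (2 * pi * of_int (k - j) * x)) / 2"
      unfolding cos_times_sin arg_add arg_diff ..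
    thus "c * cos (2 * pi * of_int k * x) * (d * sin (2 * pi * of_int j * x))
      = (c * d / 2) * sin (2 * pi * of_int (k + j) * x) + (- c * d / 2) * sin (2 * pi * of_int (k - j) * x)"
      by (rule alg2)
  qed
  thus ?thesis by (metis (no_types) tadd ts)
qed

lemma trig_sc: "trig (\<lambda>x. c * sin (2 * pi * of_int k * x) * (d * cos (2 * pi * of_int j * x)))"
proof -
  have "(\<lambda>x. c * sin (2 * pi * of_int k * x) * (d * cos (2 * pi * of_int j * x)))
      = (\<lambda>x. d * cos (2 * pi * of_int j * x) * (c * sin (2 * pi * of_int k * x)))"
    by (simp add: mult_ac)
  thus ?thesis using trig_cs by simp
qed

lemma trig_ss: "trig (\<lambda>x. c * sin (2 * pi * of_int k * x) * (d * sin (2 * pi * of_int j * x)))"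
proof -
  have "(\<lambda>x. c * sin (2 * pi * of_int k * x) * (d * sin (2 * pi * of_int j * x)))
      = (\<lambda>x. (c * d / 2) * cos (2 * pi * of_int (k - j) * x) + (- c * d / 2) * cos (2 * pi * of_int (k + j) * x))"
  proof
    fix x
    have "sin (2 * pi * of_int k * x) * sin (2 * pi * of_int j * x)
        = (cos (2 * pi * of_int (k - j) * x) - cos (2 * pi * of_int (k + j) * x)) / 2"
      unfolding sin_times_sin arg_add arg_diff ..
    thus "c * sin (2 * pi * of_int k * x) * (d * sin (2 * pi * of_int j * x))
      = (c * d / 2) * cos (2 * pi * of_int (k - j) * x) + (- c * d / 2) * cos (2 * pi * of_int (k + j) * x)"
      by (rule alg2)
  qed
  thus ?thesis by (metis (no_types) tadd tc)
qed

lemma trig_mult_base: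
  assumes "trig g"
  shows "trig (\<lambda>x. c * cos (2 * pi * of_int k * x) * g x) \<and> trig (\<lambda>x. c * sin (2 * pi * of_int k * x) * g x)"
  using assms
proof (induction rule: trig.induct)
  case (tc d j) thus ?case using trig_cc trig_sc by blast
next
  case (ts d j) thus ?case using trig_cs trig_ss by blast
next
  case (tadd f g)
  thus ?case by (auto simp: distrib_left dest: trig.tadd)
qed

lemma trig_mult: "trig f \<Longrightarrow> trig g \<Longrightarrow> trig (\<lambda>x. f x * g x)"
proof (induction rule: trig.induct)
  case (tc c k) thus ?case using trig_mult_base by blast
next
  case (ts c k) thus ?case using trig_mult_base by blast
next
  case (tadd f1 f2)
  thus ?case by (auto simp: distrib_right dest: trig.tadd)
qed

lemma trig_reflect: "trig f \<Longrightarrow> trig (\<lambda>x. f (1 - x))"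
proof (induction rule: trig.induct)
  case (tc c k)
  have "cos (2 * pi * of_int k * (1 - x)) = cos (2 * pi * of_int k * x)" for x
  proof -
    have "2 * pi * of_int k * (1 - x) = (2 * pi) * of_int k - 2 * pi * of_int k * x"
      by (simp add: algebra_simps)
    thus ?thesis using cos_int_2pin[of k] sin_int_2pin[of k] by (simp add: cos_diff)
  qed
  thus ?case by (simp add: trig.tc)
next
  case (ts c k)
  have "c * sin (2 * pi * of_int k * (1 - x)) = (- c) * sin (2 * pi * of_int k * x)" for x
  proof -
    have "2 * pi * of_int k * (1 - x) = (2 * pi) * of_int k - 2 * pi * of_int k * x"
      by (simp add: algebra_simps)
    thus ?thesis using cos_int_2pin[of k] sin_int_2pin[of k] by (simp add: sin_diff)
  qed
  hence "(\<lambda>x. c * sin (2 * pi * of_int k * (1 - x))) = (\<lambda>x. (- c) * sin (2 * pi * of_int k * x))"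
    by (intro ext)
  moreover have "trig (\<lambda>x. (- c) * sin (2 * pi * of_int k * x))" by (rule trig.ts)
  ultimately show ?case by metis
next
  case (tadd f g) thus ?case by (simp add: trig.tadd)
qed

lemma trig_poly: "real_polynomial_function p \<Longrightarrow> trig (\<lambda>x. p (cos (2 * pi * x)))"
proof (induction rule: real_polynomial_function.induct)
  case (linear f)
  then obtain c where "f = (\<lambda>x. x * c)" by (auto simp: real_bounded_linear)
  moreover have "trig (\<lambda>x. c * cos (2 * pi * of_int 1 * x))" by (rule tc)
  ultimately show ?case by (simp add: mult.commute)
next
  case (const c) thus ?case by (rule trig_const)
next
  case (add f g) thus ?case using tadd by simp
next
  case (mult f g) thus ?case using trig_mult by simp
qed

definition orth :: "(real \<Rightarrow> real) \<Rightarrow> bool" where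
  "orth D \<longleftrightarrow> (\<forall>T. trig T \<longrightarrow> (\<integral>x. D x * T x * indicator {0..1} x \<partial>lborel) = 0)"

lemma int_DT: "continuous_on {0..1} D \<Longrightarrow> trig T \<Longrightarrow> integrable lborel (\<lambda>x. D x * T x * indicator {0..1} x)"
  by (rule int01, rule continuous_on_mult, assumption, rule trig_cont)

lemma orthI:
  assumes cD: "continuous_on {0..1} D"
    and hc: "\<And>n::nat. (\<integral>x. D x * cos (2 * pi * real n * x) * indicator {0..1} x \<partial>lborel) = 0"
    and hs: "\<And>n::nat. (\<integral>x. D x * sin (2 * pi * real n * x) * indicator {0..1} x \<partial>lborel) = 0"
  shows "orth D"
  unfolding orth_def
proof (intro allI impI)
  fix T assume "trig T"
  thus "(\<integral>x. D x * T x * indicator {0..1} x \<partial>lborel) = 0"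
  proof (induction rule: trig.induct)
    case (tc c k)
    define n where "n = nat \<bar>k\<bar>"
    have e: "cos (2 * pi * of_int k * x) = cos (2 * pi * real n * x)" for x
    proof (cases "k \<ge> 0")
      case True thus ?thesis by (simp add: n_def)
    next
      case False
      hence "2 * pi * real n * x = - (2 * pi * of_int k * x)" by (simp add: n_def)
      thus ?thesis by (metis cos_minus)
    qed
    have "(\<integral>x. D x * (c * cos (2 * pi * of_int k * x)) * indicator {0..1} x \<partial>lborel)
        = (\<integral>x. c * (D x * cos (2 * pi * real n * x) * indicator {0..1} x) \<partial>lborel)"
      by (rule Bochner_Integration.integral_cong[OF refl], unfold e, simp add: mult_ac)
    also have "\<dots> = 0" by (simp add: hc)
    finally show ?case .
  next
    case (ts c k)
    define n where "n = nat \<bar>k\<bar>"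
    define s where "s = (if k \<ge> 0 then c else - c)"
    have e: "c * sin (2 * pi * of_int k * x) = s * sin (2 * pi * real n * x)" for x
    proof (cases "k \<ge> 0")
      case True thus ?thesis by (simp add: n_def s_def)
    next
      case False
      hence h: "2 * pi * real n * x = - (2 * pi * of_int k * x)" by (simp add: n_def)
      have s: "s = - c" using False by (simp add: s_def)
      show ?thesis unfolding s h sin_minus by simp
    qed
    have "(\<integral>x. D x * (c * sin (2 * pi * of_int k * x)) * indicator {0..1} x \<partial>lborel)
        = (\<integral>x. s * (D x * sin (2 * pi * real n * x) * indicator {0..1} x) \<partial>lborel)"
    proof (rule Bochner_Integration.integral_cong[OF refl])
      fix x
      have "D x * (c * sin (2 * pi * of_int k * x)) * indicator {0..1} x
          = D x * (s * sin (2 * pi * real n * x)) * indicator {0..1} x" by (simp only: e)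
      thus "D x * (c * sin (2 * pi * of_int k * x)) * indicator {0..1} x
          = s * (D x * sin (2 * pi * real n * x) * indicator {0..1} x)" by (simp only: mult_ac)
    qed
    also have "\<dots> = 0" by (simp add: hs)
    finally show ?case .
  next
    case (tadd f g)
    have "(\<integral>x. D x * (f x + g x) * indicator {0..1} x \<partial>lborel)
        = (\<integral>x. D x * f x * indicator {0..1} x + D x * g x * indicator {0..1} x \<partial>lborel)"
      by (simp add: algebra_simps)
    also have "\<dots> = (\<integral>x. D x * f x * indicator {0..1} x \<partial>lborel) + (\<integral>x. D x * g x * indicator {0..1} x \<partial>lborel)"
      by (rule Bochner_Integration.integral_add; rule int_DT[OF cD]; fact)
    finally show ?case using tadd by simp
  qed
qed

lemma F_eq_poly_arg:
  assumes x: "x \<in> {0..1}" and sym: "\<And>x. x \<in> {0..1} \<Longrightarrow> F (1 - x) = F x"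
  shows "F x = F (arccos (cos (2 * pi * x)) / (2 * pi))"
proof (cases "x \<le> 1/2")
  case True
  hence "arccos (cos (2 * pi * x)) = 2 * pi * x" using x by (intro arccos_cos) auto
  thus ?thesis by simp
next
  case False
  have "cos (2 * pi * x) = cos (2 * pi * (1 - x))"
  proof -
    have "2 * pi * (1 - x) = 2 * pi - 2 * pi * x" by (simp add: algebra_simps)
    thus ?thesis by simp
  qed
  moreover have "arccos (cos (2 * pi * (1 - x))) = 2 * pi * (1 - x)" using x False by (intro arccos_cos) auto
  ultimately have "F (arccos (cos (2 * pi * x)) / (2 * pi)) = F (1 - x)" by simp
  thus ?thesis using sym[OF x] by simp
qed

lemma even_zero:
  assumes cF: "continuous_on {0..1} F" and sym: "\<And>x. x \<in> {0..1} \<Longrightarrow> F (1 - x) = F x"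
    and oF: "orth F"
  shows "(\<integral>x. F x * F x * indicator {0..1} x \<partial>lborel) = 0"
proof -
  define I where "I = (\<integral>x. F x * F x * indicator {0..1} x \<partial>lborel)"
  have I0: "0 \<le> I" unfolding I_def by (intro integral_nonneg_AE AE_I2) (auto simp: indicator_def)
  obtain M where M: "M > 0" "\<And>x. x \<in> {0..1} \<Longrightarrow> \<bar>F x\<bar> \<le> M"
    using compact_imp_bounded[OF compact_continuous_image[OF cF compact_Icc]]
    unfolding bounded_pos by auto
  define f where "f y = F (arccos y / (2 * pi))" for y
  have cf: "continuous_on {-1..1} f"
    unfolding f_def
  proof (rule continuous_on_compose2[OF cF])
    show "continuous_on {-1..1} (\<lambda>y. arccos y / (2 * pi))"
      by (intro continuous_intros continuous_on_arccos') auto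
    show "(\<lambda>y. arccos y / (2 * pi)) ` {-1..1} \<subseteq> {0..1}"
    proof
      fix z assume "z \<in> (\<lambda>y. arccos y / (2 * pi)) ` {-1..1}"
      then obtain y where y: "y \<in> {-1..1}" "z = arccos y / (2 * pi)" by auto
      have a1: "0 \<le> arccos y" "arccos y \<le> pi" using y arccos_bounded by auto
      have "arccos y / (2 * pi) \<le> pi / (2 * pi)" using a1 by (intro divide_right_mono) auto
      moreover have "0 \<le> arccos y / (2 * pi)" using a1 by simp
      ultimately have "0 \<le> z" "z \<le> 1/2" using y(2) by simp_all
      thus "z \<in> {0..1}" by simp
    qed
  qed
  have Iple: "I \<le> M * e" if e: "e > 0" for e
  proof -
    obtain p where p: "real_polynomial_function p" "\<And>y. y \<in> {-1..1} \<Longrightarrow> \<bar>f y - p y\<bar> < e"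
      using Stone_Weierstrass_real_polynomial_function[OF compact_Icc cf e] by blast
    define T where "T x = p (cos (2 * pi * x))" for x
    have tT: "trig T" unfolding T_def[abs_def] by (rule trig_poly[OF p(1)])
    have close: "\<bar>F x - T x\<bar> \<le> e" if x: "x \<in> {0..1}" for x
    proof -
      have "F x = f (cos (2 * pi * x))" unfolding f_def using F_eq_poly_arg[of x F, OF x sym] by simp
      moreover have "cos (2 * pi * x) \<in> {-1..1}" by auto
      ultimately show ?thesis using p(2)[of "cos (2 * pi * x)"] by (simp add: T_def)
    qed
    have o: "(\<integral>x. F x * T x * indicator {0..1} x \<partial>lborel) = 0" using oF tT unfolding orth_def by blast
    have "I = I - (\<integral>x. F x * T x * indicator {0..1} x \<partial>lborel)" using o by simp
    also have "\<dots> = (\<integral>x. F x * (F x - T x) * indicator {0..1} x \<partial>lborel)"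
    proof -
      have iFF: "integrable lborel (\<lambda>x. F x * F x * indicator {0..1} x)"
        by (rule int01, rule continuous_on_mult[OF cF cF])
      have "I - (\<integral>x. F x * T x * indicator {0..1} x \<partial>lborel)
          = (\<integral>x. F x * F x * indicator {0..1} x - F x * T x * indicator {0..1} x \<partial>lborel)"
        unfolding I_def by (rule Bochner_Integration.integral_diff[symmetric, OF iFF int_DT[OF cF tT]])
      also have "\<dots> = (\<integral>x. F x * (F x - T x) * indicator {0..1} x \<partial>lborel)"
        by (rule Bochner_Integration.integral_cong[OF refl]) (simp add: algebra_simps)
      finally show ?thesis .
    qed
    also have "\<dots> \<le> (\<integral>x. M * e * indicator {0..1::real} x \<partial>lborel)"
    proof (rule Bochner_Integration.integral_mono)
      show "integrable lborel (\<lambda>x. F x * (F x - T x) * indicator {0..1} x)"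
        by (intro int01 continuous_intros cF continuous_on_subset[OF trig_cont[OF tT]]) auto
      show "integrable lborel (\<lambda>x. M * e * indicator {0..1::real} x)"
        by (rule integrable_mult_right[OF int_ind01])
      fix x
      show "F x * (F x - T x) * indicator {0..1} x \<le> M * e * indicator {0..1} x"
      proof (cases "x \<in> {0..1}")
        case True
        have "F x * (F x - T x) \<le> \<bar>F x\<bar> * \<bar>F x - T x\<bar>" by (metis abs_ge_self abs_mult)
        also have "\<dots> \<le> M * e" using M(2)[OF True] close[OF True] by (intro mult_mono) auto
        finally show ?thesis using True by simp
      qed simp
    qed
    also have "\<dots> = M * e" by (rule int_ind01_eq)
    finally show ?thesis .
  qed
  have "I \<le> 0"
  proof (rule ccontr)
    assume "\<not> I \<le> 0"
    hence "I > 0" by simp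
    hence "I \<le> M * (I / (2 * M))" using Iple[of "I / (2 * M)"] M by simp
    also have "\<dots> = I / 2" using M by simp
    finally show False using \<open>I > 0\<close> by simp
  qed
  thus ?thesis using I0 unfolding I_def by simp
qed

lemma sin_nz:
  assumes "0 < x" "x < 1" "x \<noteq> 1/2" shows "sin (2 * pi * x) \<noteq> 0"
proof
  assume "sin (2 * pi * x) = 0"
  then obtain i :: int where i: "2 * pi * x = of_int i * pi" by (auto simp: sin_zero_iff_int2)
  hence xi: "x = of_int i / 2" by (simp add: field_simps)
  hence "0 < i" "i < 2" using assms by auto
  hence "i = 1" by simp
  thus False using xi assms by simp
qed

lemma ind_reflect: "indicator {0..1::real} (1 + - 1 * x) = (indicator {0..1} x :: real)"
  by (auto simp: indicator_def)

lemma orth_reflect: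
  assumes oD: "orth D"
  shows "orth (\<lambda>x. D (1 - x))"
  unfolding orth_def
proof (intro allI impI)
  fix T assume tT: "trig T"
  have "(\<integral>x. D (1 - x) * T x * indicator {0..1} x \<partial>lborel)
      = \<bar>- 1\<bar> *\<^sub>R (\<integral>x. D (1 - (1 + - 1 * x)) * T (1 + - 1 * x) * indicator {0..1} (1 + - 1 * x) \<partial>lborel)"
    by (rule lborel_integral_real_affine) simp
  also have "\<dots> = (\<integral>x. D x * T (1 - x) * indicator {0..1} x \<partial>lborel)"
    by (simp only: ind_reflect) simp
  also have "\<dots> = 0" using oD trig_reflect[OF tT] unfolding orth_def by blast
  finally show "(\<integral>x. D (1 - x) * T x * indicator {0..1} x \<partial>lborel) = 0" .
qed

lemma orth_add:
  assumes "continuous_on {0..1} D1" "continuous_on {0..1} D2" "orth D1" "orth D2"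
  shows "orth (\<lambda>x. D1 x + D2 x)"
  unfolding orth_def
proof (intro allI impI)
  fix T assume tT: "trig T"
  have "(\<integral>x. (D1 x + D2 x) * T x * indicator {0..1} x \<partial>lborel)
      = (\<integral>x. D1 x * T x * indicator {0..1} x + D2 x * T x * indicator {0..1} x \<partial>lborel)"
    by (simp add: algebra_simps)
  also have "\<dots> = (\<integral>x. D1 x * T x * indicator {0..1} x \<partial>lborel) + (\<integral>x. D2 x * T x * indicator {0..1} x \<partial>lborel)"
    by (rule Bochner_Integration.integral_add[OF int_DT[OF assms(1) tT] int_DT[OF assms(2) tT]])
  also have "\<dots> = 0" using assms(3,4) tT unfolding orth_def by simp
  finally show "(\<integral>x. (D1 x + D2 x) * T x * indicator {0..1} x \<partial>lborel) = 0" .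
qed

lemma orth_sin:
  assumes "continuous_on {0..1} D1" "continuous_on {0..1} D2" "orth D1" "orth D2"
  shows "orth (\<lambda>x. (D1 x - D2 x) * sin (2 * pi * x))"
  unfolding orth_def
proof (intro allI impI)
  fix T assume tT: "trig T"
  have tS: "trig (\<lambda>x. sin (2 * pi * x) * T x)"
    using trig_mult[OF trig.ts[of 1 1] tT] by simp
  have "(\<integral>x. (D1 x - D2 x) * sin (2 * pi * x) * T x * indicator {0..1} x \<partial>lborel)
      = (\<integral>x. D1 x * (sin (2 * pi * x) * T x) * indicator {0..1} x - D2 x * (sin (2 * pi * x) * T x) * indicator {0..1} x \<partial>lborel)"
    by (simp add: algebra_simps)
  also have "\<dots> = (\<integral>x. D1 x * (sin (2 * pi * x) * T x) * indicator {0..1} x \<partial>lborel) - (\<integral>x. D2 x * (sin (2 * pi * x) * T x) * indicator {0..1} x \<partial>lborel)"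
    by (rule Bochner_Integration.integral_diff[OF int_DT[OF assms(1) tS] int_DT[OF assms(2) tS]])
  also have "\<dots> = 0" using assms(3,4) tS unfolding orth_def by simp
  finally show "(\<integral>x. (D1 x - D2 x) * sin (2 * pi * x) * T x * indicator {0..1} x \<partial>lborel) = 0" .
qed

lemma sq_zero_AE:
  fixes F :: "real \<Rightarrow> real"
  assumes cF: "continuous_on {0..1} F" and I: "(\<integral>x. F x * F x * indicator {0..1} x \<partial>lborel) = 0"
  shows "AE x in lborel. F x * F x * indicator {0..1} x = 0"
proof -
  have iFF: "integrable lborel (\<lambda>x. F x * F x * indicator {0..1} x)"
    by (rule int01, rule continuous_on_mult[OF cF cF])
  show ?thesis
    using iFF I by (subst integral_nonneg_eq_0_iff_AE[symmetric]) (auto simp: indicator_def)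
qed

lemma uniq:
  assumes cD: "continuous_on {0..1} D"
    and hc: "\<And>n::nat. (\<integral>x. D x * cos (2 * pi * real n * x) * indicator {0..1} x \<partial>lborel) = 0"
    and hs: "\<And>n::nat. (\<integral>x. D x * sin (2 * pi * real n * x) * indicator {0..1} x \<partial>lborel) = 0"
  shows "AE x in lborel. x \<in> {0..1} \<longrightarrow> D x = 0"
proof -
  have oD: "orth D" by (rule orthI[OF cD hc hs])
  define R where "R x = D (1 - x)" for x
  have cR: "continuous_on {0..1} R"
    unfolding R_def by (rule continuous_on_compose2[OF cD]) (auto intro!: continuous_intros)
  have oR: "orth R" unfolding R_def[abs_def] by (rule orth_reflect[OF oD])
  define E where "E x = D x + R x" for x
  have cE: "continuous_on {0..1} E" unfolding E_def[abs_def] by (intro continuous_intros cD cR)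
  have oE: "orth E" unfolding E_def[abs_def] by (rule orth_add[OF cD cR oD oR])
  have sE: "E (1 - x) = E x" for x by (simp add: E_def R_def)
  define Od where "Od x = (D x - R x) * sin (2 * pi * x)" for x
  have cO: "continuous_on {0..1} Od" unfolding Od_def[abs_def] by (intro continuous_intros cD cR)
  have oO: "orth Od" unfolding Od_def[abs_def] by (rule orth_sin[OF cD cR oD oR])
  have sO: "Od (1 - x) = Od x" for x
  proof -
    have "sin (2 * pi * (1 - x)) = - sin (2 * pi * x)"
    proof -
      have "2 * pi * (1 - x) = 2 * pi - 2 * pi * x" by (simp add: algebra_simps)
      thus ?thesis by simp
    qed
    thus ?thesis by (simp add: Od_def R_def algebra_simps)
  qed
  have aE: "AE x in lborel. E x * E x * indicator {0..1} x = 0"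
    by (rule sq_zero_AE[OF cE even_zero[OF cE sE oE]])
  have aO: "AE x in lborel. Od x * Od x * indicator {0..1} x = 0"
    by (rule sq_zero_AE[OF cO even_zero[OF cO sO oO]])
  show ?thesis
    using aE aO AE_lborel_singleton[of "0::real"] AE_lborel_singleton[of "1::real"] AE_lborel_singleton[of "1/2::real"]
  proof eventually_elim
    case (elim x)
    show ?case
    proof
      assume x: "x \<in> {0..1}"
      have "E x = 0" using elim x by simp
      moreover have "Od x = 0" using elim x by simp
      moreover have "sin (2 * pi * x) \<noteq> 0" using x elim by (intro sin_nz) auto
      ultimately show "D x = 0" by (simp add: E_def Od_def)
    qed
  qed
qed

lemma co_cc:
  fixes f :: "real \<Rightarrow> real"
  assumes [measurable]: "f \<in> borel_measurable borel"
  shows "(\<integral>x. f x * indicator {0..<1} x \<partial>lborel) = (\<integral>x. f x * indicator {0..1::real} x \<partial>lborel)"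
proof (rule integral_cong_AE)
  show "AE x in lborel. f x * indicator {0..<1} x = f x * indicator {0..1::real} x"
    using AE_lborel_singleton[of "1::real"] by eventually_elim (auto simp: indicator_def)
qed measurable

lemma G_eq_Th:
  assumes a: "a > 0"
  shows "AE x in lborel. x \<in> {0..1} \<longrightarrow> G a x = Th a x"
proof -
  have cG: "continuous_on {0..1} (G a)" by (rule G_continuous[OF a])
  have cT: "continuous_on {0..1} (Th a)" by (rule Th_continuous[OF a])
  have "AE x in lborel. x \<in> {0..1} \<longrightarrow> G a x - Th a x = 0"
  proof (rule uniq)
    show "continuous_on {0..1} (\<lambda>x. G a x - Th a x)" by (intro continuous_intros cG cT)
  next
    fix n :: nat
    have i1: "integrable lborel (\<lambda>x. G a x * cos (2 * pi * real n * x) * indicator {0..1} x)"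
      by (intro int01 continuous_intros cG)
    have i2: "integrable lborel (\<lambda>x. Th a x * cos (2 * pi * real n * x) * indicator {0..1} x)"
      by (intro int01 continuous_intros cT)
    have "(\<integral>x. (G a x - Th a x) * cos (2 * pi * real n * x) * indicator {0..1} x \<partial>lborel)
        = (\<integral>x. G a x * cos (2 * pi * real n * x) * indicator {0..1} x - Th a x * cos (2 * pi * real n * x) * indicator {0..1} x \<partial>lborel)"
      by (simp add: algebra_simps)
    also have "\<dots> = (\<integral>x. G a x * cos (2 * pi * real n * x) * indicator {0..1} x \<partial>lborel) - (\<integral>x. Th a x * cos (2 * pi * real n * x) * indicator {0..1} x \<partial>lborel)"
      by (rule Bochner_Integration.integral_diff[OF i1 i2])
    also have "(\<integral>x. G a x * cos (2 * pi * real n * x) * indicator {0..1} x \<partial>lborel) = exp (- 2 * pi\<^sup>2 * a\<^sup>2 * (real n)\<^sup>2)"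
      using FG_cos[OF a, of n] co_cc[of "\<lambda>x. G a x * cos (2 * pi * real n * x)"] by simp
    also have "(\<integral>x. Th a x * cos (2 * pi * real n * x) * indicator {0..1} x \<partial>lborel) = exp (- 2 * pi\<^sup>2 * a\<^sup>2 * (real n)\<^sup>2)"
      by (rule FTh_cos[OF a])
    finally show "(\<integral>x. (G a x - Th a x) * cos (2 * pi * real n * x) * indicator {0..1} x \<partial>lborel) = 0" by simp
  next
    fix n :: nat
    have i1: "integrable lborel (\<lambda>x. G a x * sin (2 * pi * real n * x) * indicator {0..1} x)"
      by (intro int01 continuous_intros cG)
    have i2: "integrable lborel (\<lambda>x. Th a x * sin (2 * pi * real n * x) * indicator {0..1} x)"
      by (intro int01 continuous_intros cT)
    have "(\<integral>x. (G a x - Th a x) * sin (2 * pi * real n * x) * indicator {0..1} x \<partial>lborel)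
        = (\<integral>x. G a x * sin (2 * pi * real n * x) * indicator {0..1} x - Th a x * sin (2 * pi * real n * x) * indicator {0..1} x \<partial>lborel)"
      by (simp add: algebra_simps)
    also have "\<dots> = (\<integral>x. G a x * sin (2 * pi * real n * x) * indicator {0..1} x \<partial>lborel) - (\<integral>x. Th a x * sin (2 * pi * real n * x) * indicator {0..1} x \<partial>lborel)"
      by (rule Bochner_Integration.integral_diff[OF i1 i2])
    also have "(\<integral>x. G a x * sin (2 * pi * real n * x) * indicator {0..1} x \<partial>lborel) = 0"
      using FG_sin[OF a, of n] co_cc[of "\<lambda>x. G a x * sin (2 * pi * real n * x)"] by simp
    also have "(\<integral>x. Th a x * sin (2 * pi * real n * x) * indicator {0..1} x \<partial>lborel) = 0"
      by (rule FTh_sin[OF a])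
    finally show "(\<integral>x. (G a x - Th a x) * sin (2 * pi * real n * x) * indicator {0..1} x \<partial>lborel) = 0" by simp
  qed
  thus ?thesis by simp
qed

lemma interval_bounds:
  fixes a b :: real
  assumes "a < b" "{a..<b} \<subseteq> {0..1}" shows "0 \<le> a" "b \<le> 1"
proof -
  show "0 \<le> a" using assms by auto
  show "b \<le> 1"
  proof (rule ccontr)
    assume "\<not> b \<le> 1"
    define y where "y = max a ((1 + b) / 2)"
    have "y \<in> {a..<b}" using assms \<open>\<not> b \<le> 1\<close> by (auto simp: y_def)
    moreover have "y > 1" using \<open>\<not> b \<le> 1\<close> unfolding y_def by (auto simp: less_max_iff_disj)
    ultimately show False using assms by auto
  qed
qed

theorem lemma4p2:
  fixes M :: "'s measure" and Z :: "'s \<Rightarrow> real"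
    and alpha :: "nat \<Rightarrow> real" and a b :: "nat \<Rightarrow> real" and l :: real
  assumes "prob_space M"
    and "distributed M lborel Z std_normal_density"
    and "incseq alpha" and "\<And>N. alpha N > 0"
    and "filterlim alpha at_top sequentially"
    and "\<And>n. a n \<le> b n"
    and "\<And>n. {a n..<b n} \<subseteq> {0..1}"
    and "disjoint_family (\<lambda>n. {a n..<b n})"
    and "(\<lambda>n. b n - a n) sums l" and "l \<le> 1"
  shows "\<forall>N. \<bar>measure M {\<omega> \<in> space M. alpha N * Z \<omega> \<in>
              (\<Union>k::int. \<Union>n. {a n + of_int k..<b n + of_int k})} - l\<bar>
            < 4 * exp (- 2 * pi\<^sup>2 * (alpha N)\<^sup>2)"
proof
  fix N
  note ps = assms(1) and Zd = assms(2) and ab = assms(6) and sub = assms(7)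
    and disj = assms(8) and lsum = assms(9) and l1 = assms(10)
  interpret prob_space M by (rule ps)
  define s where "s = alpha N"
  have s: "s > 0" using assms(4) by (simp add: s_def)
  define U where "U = (\<Union>k::int. \<Union>n. {a n + of_int k..<b n + of_int k})"
  define S where "S = (\<Union>n. {a n..<b n})"
  have Um[measurable]: "U \<in> sets borel" unfolding U_def by measurable
  have Sm[measurable]: "S \<in> sets borel" unfolding S_def by measurable
  have S01: "S \<subseteq> {0..1}" using sub by (auto simp: S_def)
  have Uper: "indicator U (y + of_int k) = (indicator U y :: real)" for y and k :: int
  proof -
    have "y + of_int k \<in> U \<longleftrightarrow> y \<in> U"
    proof
      assume "y + of_int k \<in> U"
      then obtain j n where "a n + of_int j \<le> y + of_int k" "y + of_int k < b n + of_int j"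
        by (auto simp: U_def)
      hence "y \<in> {a n + of_int (j - k)..<b n + of_int (j - k)}" by auto
      thus "y \<in> U" unfolding U_def by blast
    next
      assume "y \<in> U"
      then obtain j n where "a n + of_int j \<le> y" "y < b n + of_int j"
        by (auto simp: U_def)
      hence "y + of_int k \<in> {a n + of_int (j + k)..<b n + of_int (j + k)}" by auto
      thus "y + of_int k \<in> U" unfolding U_def by blast
    qed
    thus ?thesis by (simp add: indicator_def)
  qed
  have US: "indicator U x * indicator {0..<1} x = (indicator S x :: real)" for x
  proof -
    have "x \<in> U \<and> x \<in> {0..<1} \<longleftrightarrow> x \<in> S"
    proof
      assume h: "x \<in> U \<and> x \<in> {0..<1}"
      then obtain k :: int and n where k: "a n + of_int k \<le> x" "x < b n + of_int k"
        by (auto simp: U_def)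
      hence "a n < b n" by simp
      from interval_bounds[OF this sub] have "0 \<le> a n" "b n \<le> 1" .
      hence "of_int k < (1::real)" "of_int k > (-1::real)" using k h by auto
      hence "k = 0" by linarith
      thus "x \<in> S" using k unfolding S_def by auto
    next
      assume "x \<in> S"
      then obtain n where n: "x \<in> {a n..<b n}" by (auto simp: S_def)
      hence "a n < b n" by simp
      from interval_bounds[OF this sub] have "0 \<le> a n" "b n \<le> 1" .
      hence "x \<in> {0..<1}" using n by auto
      moreover have "x \<in> {a n + of_int 0..<b n + of_int 0}" using n by simp
      hence "x \<in> U" unfolding U_def by blast
      ultimately show "x \<in> U \<and> x \<in> {0..<1}" by simp
    qed
    thus ?thesis by (auto simp: indicator_def)
  qed
  have dist: "distributed M lborel (\<lambda>\<omega>. s * Z \<omega>) (phi s)"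
  proof -
    have "distributed M lborel (\<lambda>x. 0 + s * Z x) (normal_density (0 + s * 0) (\<bar>s\<bar> * 1))"
      by (rule normal_density_affine[OF Zd]) (use s in auto)
    moreover have e1: "(\<lambda>x. 0 + s * Z x) = (\<lambda>\<omega>. s * Z \<omega>)" by simp
    moreover have e2: "normal_density (0 + s * 0) (\<bar>s\<bar> * 1) = phi s"
      using s by (intro ext) (simp add: phi_def)
    ultimately show ?thesis by simp
  qed
  have Zm[measurable]: "(\<lambda>\<omega>. s * Z \<omega>) \<in> borel_measurable M"
    using distributed_measurable[OF dist] by simp
  define P where "P = measure M {\<omega> \<in> space M. s * Z \<omega> \<in> U}"
  have "P = (\<integral>\<omega>. indicator U (s * Z \<omega>) \<partial>M)"
  proof -
    have "(\<integral>\<omega>. indicator U (s * Z \<omega>) \<partial>M) = (\<integral>\<omega>. indicator {\<omega> \<in> space M. s * Z \<omega> \<in> U} \<omega> \<partial>M)"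
      by (rule Bochner_Integration.integral_cong) (auto simp: indicator_def)
    also have "\<dots> = P" by (simp add: P_def Int_absorb2 Collect_subset)
    finally show ?thesis by simp
  qed
  also have "\<dots> = (\<integral>y. phi s y * indicator U y \<partial>lborel)"
    by (rule distributed_integral[OF dist, symmetric]) (auto simp: phi_nonneg)
  also have "\<dots> = (\<integral>x. G s x * indicator U x * indicator {0..<1} x \<partial>lborel)"
    by (rule L1[OF s, where B=1]) (auto simp: Uper)
  also have "\<dots> = (\<integral>x. G s x * indicator S x \<partial>lborel)"
    by (rule Bochner_Integration.integral_cong[OF refl]) (simp add: mult.assoc US)
  also have "\<dots> = (\<integral>x. Th s x * indicator S x \<partial>lborel)"
  proof (rule integral_cong_AE)
    show "AE x in lborel. G s x * indicator S x = Th s x * indicator S x"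
      using G_eq_Th[OF s] by eventually_elim (use S01 in \<open>auto simp: indicator_def\<close>)
  qed measurable
  finally have Peq: "P = (\<integral>x. Th s x * indicator S x \<partial>lborel)" .
  have Sfin: "emeasure lborel S < \<infinity>"
  proof -
    have "emeasure lborel S \<le> emeasure lborel {0..1::real}" by (rule emeasure_mono[OF S01]) simp
    thus ?thesis by (simp add: le_less_trans[OF _ ennreal_less_top[of 1]])
  qed
  have lS: "l = measure lborel S"
  proof -
    have "(\<lambda>n. measure lborel {a n..<b n}) sums measure lborel S"
      unfolding S_def by (rule measure_UNION) (use disj Sfin in \<open>auto simp: S_def\<close>)
    hence "(\<lambda>n. b n - a n) sums measure lborel S" using ab by simp
    thus ?thesis using lsum sums_unique2 by blast
  qed
  have intS: "integrable lborel (indicator S :: real \<Rightarrow> real)" using Sfin by simp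
  have lint: "l = (\<integral>x. indicator S x \<partial>lborel)" using lS by simp
  define q where "q = exp (- 2 * pi\<^sup>2 * s\<^sup>2)"
  have q: "0 < q" "q < 1" using s by (auto simp: q_def)
  define K where "K = 2 * q / (1 - q)"
  have K0: "0 \<le> K" using q by (simp add: K_def)
  have Thb: "\<bar>Th s x - 1\<bar> \<le> K" for x using Th_bound[OF s, of x] by (simp add: K_def q_def)
  have intTh: "integrable lborel (\<lambda>x. (Th s x - 1) * indicator S x)"
  proof (rule Bochner_Integration.integrable_bound[where f="\<lambda>x. K * indicator S x"])
    show "integrable lborel (\<lambda>x. K * indicator S x)" using intS by simp
    show "AE x in lborel. norm ((Th s x - 1) * indicator S x) \<le> norm (K * indicator S x)"
      using Thb K0 by (intro AE_I2) (auto simp: indicator_def)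
  qed measurable
  have "P - l = (\<integral>x. (Th s x - 1) * indicator S x \<partial>lborel)"
  proof -
    have "(\<integral>x. (Th s x - 1) * indicator S x \<partial>lborel) = (\<integral>x. Th s x * indicator S x - indicator S x \<partial>lborel)"
      by (simp add: algebra_simps)
    also have "\<dots> = (\<integral>x. Th s x * indicator S x \<partial>lborel) - (\<integral>x. indicator S x \<partial>lborel)"
    proof (rule Bochner_Integration.integral_diff[OF _ intS])
      have "integrable lborel (\<lambda>x. (Th s x - 1) * indicator S x + indicator S x)"
        by (rule Bochner_Integration.integrable_add[OF intTh intS])
      thus "integrable lborel (\<lambda>x. Th s x * indicator S x)" by (simp add: algebra_simps)
    qed
    finally show ?thesis using Peq lint by simp
  qed
  hence "\<bar>P - l\<bar> \<le> (\<integral>x. norm ((Th s x - 1) * indicator S x) \<partial>lborel)"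
    using integral_norm_bound[of lborel "\<lambda>x. (Th s x - 1) * indicator S x"] by simp
  also have "\<dots> \<le> (\<integral>x. K * indicator S x \<partial>lborel)"
    by (rule Bochner_Integration.integral_mono[OF integrable_norm[OF intTh] integrable_mult_right[OF intS]])
       (use Thb K0 in \<open>auto simp: indicator_def\<close>)
  also have "\<dots> = K * l" using lint by simp
  also have "\<dots> \<le> K"
  proof -
    have "0 \<le> l" by (rule sums_le[OF _ sums_zero lsum]) (use ab in simp)
    thus ?thesis using l1 K0 by (simp add: mult_left_le)
  qed
  finally have PK: "\<bar>P - l\<bar> \<le> K" .
  have P01: "0 \<le> P" "P \<le> 1" unfolding P_def by (rule measure_nonneg, rule prob_le_1)
  have l0: "0 \<le> l" by (rule sums_le[OF _ sums_zero lsum]) (use ab in simp)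
  have l01: "0 \<le> l" "l \<le> 1" using l0 l1 by simp_all
  have "\<bar>P - l\<bar> < 4 * q"
  proof (cases "q > 1/4")
    case True
    have "\<bar>P - l\<bar> \<le> 1" using P01 l01 by linarith
    thus ?thesis using True by linarith
  next
    case False
    hence "1 - q \<ge> 3/4" by simp
    hence "K \<le> 2 * q / (3/4)" unfolding K_def using q by (intro divide_left_mono) auto
    also have "\<dots> < 4 * q" using q by simp
    finally show ?thesis using PK by linarith
  qed
  thus "\<bar>measure M {\<omega> \<in> space M. alpha N * Z \<omega> \<in>
              (\<Union>k::int. \<Union>n. {a n + of_int k..<b n + of_int k})} - l\<bar>
            < 4 * exp (- 2 * pi\<^sup>2 * (alpha N)\<^sup>2)"
    unfolding P_def U_def s_def q_def .
qed

end
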